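(* If $F$ is a field of non-zero characteristic $p$, then $\text{Ш}_F(F)$ is not a noetherian ring.
   Context: $\text{Ш}_F(F)=\bigoplus_{n\in\mathbb{N}} F\,\mathbf{1}^{\otimes (n+1)}$ is the shuffle Baxter $F$-algebra on $F$ (free Baxter $F$-algebra on the empty set) of weight $\lambda\in F$, with multiplication determined by $\mathbf{1}^{\otimes (m+1)} \mathbf{1}^{\otimes (n+1)} = \sum_{k=0}^m \binom{m+n-k}{n}\binom{n}{k} \lambda^k \mathbf{1}^{\otimes (m+n+1-k)}$ and Baxter operator $P(\mathbf{1}^{\otimes(n+1)})=\mathbf{1}^{\otimes(n+2)}$. *)

theory Defs
  imports "HOL-Algebra.Ring_Divisibility"
begin

text \<open>Shuffle Baxter algebra on a field F (free Baxter F-algebra on the empty set) of weight lambda.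
  An element is represented by its finitely supported coefficient function c :: nat => F,
  c n being the coefficient of the basis tensor 1^{(n+1)}.\<close>

definition sh_carrier :: "(nat \<Rightarrow> 'a::field) set" where
  "sh_carrier = {c. finite {n. c n \<noteq> 0}}"

text \<open>Bilinear extension of
  1^{(m+1)} 1^{(n+1)} = sum_{k=0..m} C(m+n-k, n) C(n,k) lambda^k 1^{(m+n+1-k)}.
  The coefficient of 1^{(r+1)} in a*b collects the pairs (m,n) and k with m+n-k = r, 0<=k<=m;
  these force m,n <= r and k = m+n-r.\<close>

definition sh_mult :: "'a::field \<Rightarrow> (nat \<Rightarrow> 'a) \<Rightarrow> (nat \<Rightarrow> 'a) \<Rightarrow> (nat \<Rightarrow> 'a)" where
  "sh_mult lam a b = (\<lambda>r. \<Sum>m\<le>r. \<Sum>n\<le>r.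
      if r \<le> m + n \<and> m + n - r \<le> m
      then a m * b n * of_nat ((r choose n) * (n choose (m + n - r))) * lam ^ (m + n - r)
      else 0)"

definition shuffle_baxter_ring :: "'a::field \<Rightarrow> (nat \<Rightarrow> 'a) ring" where
  "shuffle_baxter_ring lam =
     \<lparr> carrier = sh_carrier,
       monoid.mult = sh_mult lam,
       one = (\<lambda>n. if n = 0 then 1 else 0),
       zero = (\<lambda>n. 0),
       add = (\<lambda>a b n. a n + b n) \<rparr>"

end

theory Submission
  imports Defs "HOL-Computational_Algebra.Primes"
begin

definition NN :: "nat \<Rightarrow> nat \<Rightarrow> nat \<Rightarrow> nat" where
  "NN m n r = (if r \<le> m + n \<and> m + n - r \<le> m then (r choose n) * (n choose (m + n - r)) else 0)"

lemma NN_nz: "NN m n r \<noteq> 0 \<Longrightarrow> m \<le> r \<and> n \<le> r \<and> r \<le> m + n"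
  unfolding NN_def by (auto split: if_splits simp: not_le)

lemma NN_comm: "NN m n r = NN n m r"
proof (cases "r \<le> m + n")
  case False thus ?thesis by (simp add: NN_def)
next
  case True
  define k where "k = m + n - r"
  have kk: "n + m - r = k" using True k_def by simp
  show ?thesis
  proof (cases "k \<le> m \<and> k \<le> n")
    case True
    have "(r choose n) * (n choose k) = (r choose k) * ((r - k) choose (n - k))"
      using True by (intro choose_mult) (auto simp: k_def)
    moreover have "(r choose m) * (m choose k) = (r choose k) * ((r - k) choose (m - k))"
      using True by (intro choose_mult) (auto simp: k_def)
    moreover have "((r - k) choose (n - k)) = ((r - k) choose (m - k))"
      using True \<open>r \<le> m + n\<close> by (subst binomial_symmetric) (auto simp: k_def)
    ultimately show ?thesis using True \<open>r \<le> m + n\<close> unfolding NN_def k_def[symmetric] kk by simp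
  next
    case False
    thus ?thesis using \<open>r \<le> m + n\<close> unfolding NN_def k_def[symmetric] kk by auto
  qed
qed

lemma NN_alt: "NN m n r = (if r \<le> m + n \<and> m \<le> r then (r choose m) * (m choose (m + n - r)) else 0)"
  by (subst NN_comm) (auto simp: NN_def add.commute)

lemma binom_prod:
  "(x choose m) * (x choose n) = (\<Sum>r\<le>m+n. NN m n r * (x choose r))"
proof (cases "x < m")
  case True
  have z: "NN m n r * (x choose r) = 0" for r
    using NN_nz[of m n r] True by (cases "NN m n r = 0") auto
  show ?thesis using True by (simp add: z)
next
  case False
  hence xm: "m \<le> x" by simp
  have "(x choose n) = (\<Sum>j\<le>n. (m choose j) * ((x - m) choose (n - j)))"
    using vandermonde[where r=n and m=m and n="x - m"] xm by simp
  hence "(x choose m) * (x choose n) = (\<Sum>j\<le>n. (m choose j) * ((x choose m) * ((x - m) choose (n - j))))"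
    by (simp add: sum_distrib_left mult.assoc mult.left_commute)
  also have "\<dots> = (\<Sum>j\<le>n. (m choose j) * ((m + n - j) choose m) * (x choose (m + n - j)))"
  proof (intro sum.cong refl)
    fix j assume j: "j \<in> {..n}"
    show "(m choose j) * ((x choose m) * ((x - m) choose (n - j))) =
          (m choose j) * ((m + n - j) choose m) * (x choose (m + n - j))"
    proof (cases "m + n - j \<le> x")
      case True
      have "(x choose (m + n - j)) * ((m + n - j) choose m) = (x choose m) * ((x - m) choose (m + n - j - m))"
        using True j by (intro choose_mult) auto
      thus ?thesis using j by (simp add: mult.commute mult.left_commute)
    next
      case False
      hence "(x - m) choose (n - j) = 0" "x choose (m + n - j) = 0" using j xm by auto
      thus ?thesis by (simp only: mult_0_right)
    qed
  qed
  also have "\<dots> = (\<Sum>r\<in>{m..m+n}. (m choose (m + n - r)) * (r choose m) * (x choose r))"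
  proof (rule sum.reindex_bij_witness[where i = "\<lambda>r. m + n - r" and j = "\<lambda>j. m + n - j"])
  qed auto
  also have "\<dots> = (\<Sum>r\<le>m+n. NN m n r * (x choose r))"
    by (rule sum.mono_neutral_cong_left) (auto simp: NN_alt)
  finally show ?thesis .
qed

lemma binom_prod_B:
  assumes "m + n \<le> B"
  shows "(x choose m) * (x choose n) = (\<Sum>r\<le>B. NN m n r * (x choose r))"
proof -
  have "(\<Sum>r\<le>m+n. NN m n r * (x choose r)) = (\<Sum>r\<le>B. NN m n r * (x choose r))"
  proof (rule sum.mono_neutral_left)
    show "\<forall>i\<in>{..B} - {..m + n}. NN m n i * (x choose i) = 0"
      using NN_nz[of m n] by fastforce
  qed (use assms in auto)
  thus ?thesis using binom_prod by simp
qed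

lemma lin_indep:
  assumes H: "\<And>x. (\<Sum>s\<le>B. u s * (x choose s)) = (\<Sum>s\<le>B. v s * (x choose s))"
  shows "s \<le> B \<Longrightarrow> u s = (v s :: nat)"
proof (induction s rule: less_induct)
  case (less s)
  have ex: "(\<Sum>t\<le>B. w t * (s choose t)) = (\<Sum>t<s. w t * (s choose t)) + w s" for w :: "nat \<Rightarrow> nat"
  proof -
    have "(\<Sum>t\<le>B. w t * (s choose t)) = (\<Sum>t\<le>s. w t * (s choose t))"
      by (rule sum.mono_neutral_right) (use less.prems in auto)
    also have "\<dots> = (\<Sum>t<s. w t * (s choose t)) + w s"
      by (simp add: lessThan_Suc_atMost[symmetric])
    finally show ?thesis .
  qed
  have "(\<Sum>t<s. u t * (s choose t)) = (\<Sum>t<s. v t * (s choose t))"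
    using less.IH less.prems by (intro sum.cong) auto
  thus ?case using H[of s] unfolding ex by simp
qed

lemma NN_assoc:
  "(\<Sum>r\<le>s. NN m n r * NN r q s) = (\<Sum>r\<le>s. NN n q r * NN m r s)"
proof -
  define B where "B = m + n + q"
  define u where "u s = (\<Sum>r\<le>B. NN m n r * NN r q s)" for s
  define v where "v s = (\<Sum>r\<le>B. NN n q r * NN m r s)" for s
  have uv: "u s = v s" if "s \<le> B" for s
  proof (rule lin_indep[OF _ that])
    fix x
    have "(x choose m) * (x choose n) * (x choose q) = (\<Sum>r\<le>B. NN m n r * ((x choose r) * (x choose q)))"
      by (subst binom_prod_B[of m n B]) (auto simp: B_def sum_distrib_right mult.assoc)
    also have "\<dots> = (\<Sum>r\<le>B. NN m n r * (\<Sum>s\<le>B. NN r q s * (x choose s)))"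
    proof (intro sum.cong refl)
      fix r
      show "NN m n r * ((x choose r) * (x choose q)) = NN m n r * (\<Sum>s\<le>B. NN r q s * (x choose s))"
      proof (cases "NN m n r = 0")
        case False
        thus ?thesis using NN_nz[of m n r] by (subst binom_prod_B[of r q B]) (auto simp: B_def)
      qed simp
    qed
    also have "\<dots> = (\<Sum>s\<le>B. u s * (x choose s))"
      unfolding u_def sum_distrib_left sum_distrib_right by (subst sum.swap) (simp add: mult.assoc)
    finally have 1: "(x choose m) * (x choose n) * (x choose q) = (\<Sum>s\<le>B. u s * (x choose s))" .
    have "(x choose m) * (x choose n) * (x choose q) = (\<Sum>r\<le>B. NN n q r * ((x choose m) * (x choose r)))"
      by (subst mult.assoc, subst binom_prod_B[of n q B]) (auto simp: B_def sum_distrib_left mult.left_commute)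
    also have "\<dots> = (\<Sum>r\<le>B. NN n q r * (\<Sum>s\<le>B. NN m r s * (x choose s)))"
    proof (intro sum.cong refl)
      fix r
      show "NN n q r * ((x choose m) * (x choose r)) = NN n q r * (\<Sum>s\<le>B. NN m r s * (x choose s))"
      proof (cases "NN n q r = 0")
        case False
        thus ?thesis using NN_nz[of n q r] by (subst binom_prod_B[of m r B]) (auto simp: B_def)
      qed simp
    qed
    also have "\<dots> = (\<Sum>s\<le>B. v s * (x choose s))"
      unfolding v_def sum_distrib_left sum_distrib_right by (subst sum.swap) (simp add: mult.assoc)
    finally show "(\<Sum>s\<le>B. u s * (x choose s)) = (\<Sum>s\<le>B. v s * (x choose s))" using 1 by simp
  qed
  show ?thesis
  proof (cases "s \<le> B")
    case True
    have "(\<Sum>r\<le>s. NN m n r * NN r q s) = u s" unfolding u_def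
      by (rule sum.mono_neutral_left) (use True NN_nz[of _ q s] in auto)
    moreover have "(\<Sum>r\<le>s. NN n q r * NN m r s) = v s" unfolding v_def
      by (rule sum.mono_neutral_left) (use True NN_nz[of m _ s] in auto)
    ultimately show ?thesis using uv[OF True] by simp
  next
    case False
    have z1: "NN m n r * NN r q s = 0" for r
    proof (rule ccontr)
      assume "NN m n r * NN r q s \<noteq> 0"
      hence "NN m n r \<noteq> 0" "NN r q s \<noteq> 0" by auto
      thus False using NN_nz[of m n r] NN_nz[of r q s] False by (simp add: B_def)
    qed
    have z2: "NN n q r * NN m r s = 0" for r
    proof (rule ccontr)
      assume "NN n q r * NN m r s \<noteq> 0"
      hence "NN n q r \<noteq> 0" "NN m r s \<noteq> 0" by auto
      thus False using NN_nz[of n q r] NN_nz[of m r s] False by (simp add: B_def)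
    qed
    show ?thesis by (simp only: z1 z2)
  qed
qed

definition LL :: "'a::field \<Rightarrow> nat \<Rightarrow> nat \<Rightarrow> nat \<Rightarrow> 'a" where
  "LL lam m n r = of_nat (NN m n r) * lam ^ (m + n - r)"

lemma LL_nz: "LL lam m n r \<noteq> 0 \<Longrightarrow> m \<le> r \<and> n \<le> r \<and> r \<le> m + n"
  unfolding LL_def using NN_nz[of m n r] by (cases "NN m n r = 0") auto

lemma LL_comm: "LL lam m n r = LL lam n m r"
  unfolding LL_def by (simp add: NN_comm add.commute)

lemma sh_mult_LL: "sh_mult lam a b r = (\<Sum>m\<le>r. \<Sum>n\<le>r. a m * b n * LL lam m n r)"
  unfolding sh_mult_def LL_def NN_def by (intro sum.cong refl) (simp add: mult.assoc)

lemma sh_mult_ext: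
  assumes "r \<le> B"
  shows "sh_mult lam a b r = (\<Sum>m\<le>B. \<Sum>n\<le>B. a m * b n * LL lam m n r)"
proof -
  have "(\<Sum>n\<le>r. a m * b n * LL lam m n r) = (\<Sum>n\<le>B. a m * b n * LL lam m n r)" for m
    by (rule sum.mono_neutral_left) (use assms LL_nz[of lam m _ r] in auto)
  hence "sh_mult lam a b r = (\<Sum>m\<le>r. \<Sum>n\<le>B. a m * b n * LL lam m n r)"
    unfolding sh_mult_LL by simp
  also have "\<dots> = (\<Sum>m\<le>B. \<Sum>n\<le>B. a m * b n * LL lam m n r)"
  proof (rule sum.mono_neutral_left)
    show "\<forall>i\<in>{..B} - {..r}. (\<Sum>n\<le>B. a i * b n * LL lam i n r) = 0"
      using LL_nz[of lam _ _ r] by (auto intro!: sum.neutral)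
  qed (use assms in auto)
  finally show ?thesis .
qed

lemma LL_prod1:
  "LL lam m n r * LL lam r q s = of_nat (NN m n r * NN r q s) * lam ^ (m + n + q - s)"
proof (cases "NN m n r * NN r q s = 0")
  case True thus ?thesis unfolding LL_def by auto
next
  case False
  hence "NN m n r \<noteq> 0" "NN r q s \<noteq> 0" by auto
  hence "(m + n - r) + (r + q - s) = m + n + q - s" using NN_nz[of m n r] NN_nz[of r q s] by auto
  thus ?thesis unfolding LL_def by (simp add: power_add[symmetric])
qed

lemma LL_prod2:
  "LL lam n q r * LL lam m r s = of_nat (NN n q r * NN m r s) * lam ^ (m + n + q - s)"
proof (cases "NN n q r * NN m r s = 0")
  case True thus ?thesis unfolding LL_def by auto
next
  case False
  hence "NN n q r \<noteq> 0" "NN m r s \<noteq> 0" by auto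
  hence "(n + q - r) + (m + r - s) = m + n + q - s" using NN_nz[of n q r] NN_nz[of m r s] by auto
  thus ?thesis unfolding LL_def by (simp add: power_add[symmetric])
qed

lemma LL_assoc:
  "(\<Sum>r\<le>s. LL lam m n r * LL lam r q s) = (\<Sum>r\<le>s. LL lam n q r * LL lam m r s)"
  unfolding LL_prod1 LL_prod2 sum_distrib_right[symmetric] of_nat_sum[symmetric] NN_assoc ..

lemma perm4a:
  "(\<Sum>r\<in>A. \<Sum>q\<in>A. \<Sum>m\<in>A. \<Sum>n\<in>A. f r q m n) = (\<Sum>m\<in>A. \<Sum>n\<in>A. \<Sum>q\<in>A. \<Sum>r\<in>A. f r q m n)"
proof -
  have "(\<Sum>r\<in>A. \<Sum>q\<in>A. \<Sum>m\<in>A. \<Sum>n\<in>A. f r q m n) = (\<Sum>r\<in>A. \<Sum>m\<in>A. \<Sum>q\<in>A. \<Sum>n\<in>A. f r q m n)"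
    by (rule sum.cong[OF refl], rule sum.swap)
  also have "\<dots> = (\<Sum>r\<in>A. \<Sum>m\<in>A. \<Sum>n\<in>A. \<Sum>q\<in>A. f r q m n)"
    by (rule sum.cong[OF refl], rule sum.cong[OF refl], rule sum.swap)
  also have "\<dots> = (\<Sum>m\<in>A. \<Sum>r\<in>A. \<Sum>n\<in>A. \<Sum>q\<in>A. f r q m n)"
    by (rule sum.swap)
  also have "\<dots> = (\<Sum>m\<in>A. \<Sum>n\<in>A. \<Sum>r\<in>A. \<Sum>q\<in>A. f r q m n)"
    by (rule sum.cong[OF refl], rule sum.swap)
  also have "\<dots> = (\<Sum>m\<in>A. \<Sum>n\<in>A. \<Sum>q\<in>A. \<Sum>r\<in>A. f r q m n)"
    by (rule sum.cong[OF refl], rule sum.cong[OF refl], rule sum.swap)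
  finally show ?thesis .
qed

lemma perm4b:
  "(\<Sum>m\<in>A. \<Sum>r\<in>A. \<Sum>n\<in>A. \<Sum>q\<in>A. f m r n q) = (\<Sum>m\<in>A. \<Sum>n\<in>A. \<Sum>q\<in>A. \<Sum>r\<in>A. f m r n q)"
proof -
  have "(\<Sum>m\<in>A. \<Sum>r\<in>A. \<Sum>n\<in>A. \<Sum>q\<in>A. f m r n q) = (\<Sum>m\<in>A. \<Sum>n\<in>A. \<Sum>r\<in>A. \<Sum>q\<in>A. f m r n q)"
    by (rule sum.cong[OF refl], rule sum.swap)
  also have "\<dots> = (\<Sum>m\<in>A. \<Sum>n\<in>A. \<Sum>q\<in>A. \<Sum>r\<in>A. f m r n q)"
    by (rule sum.cong[OF refl], rule sum.cong[OF refl], rule sum.swap)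
  finally show ?thesis .
qed

lemma sh_mult_assoc:
  "sh_mult lam (sh_mult lam a b) c s = sh_mult lam a (sh_mult lam b c) s"
proof -
  have "sh_mult lam (sh_mult lam a b) c s =
     (\<Sum>r\<le>s. \<Sum>q\<le>s. (\<Sum>m\<le>s. \<Sum>n\<le>s. a m * b n * LL lam m n r) * c q * LL lam r q s)"
    unfolding sh_mult_LL[of lam "sh_mult lam a b"] by (intro sum.cong refl) (simp add: sh_mult_ext)
  also have "\<dots> = (\<Sum>r\<le>s. \<Sum>q\<le>s. \<Sum>m\<le>s. \<Sum>n\<le>s. a m * b n * c q * (LL lam m n r * LL lam r q s))"
    by (simp only: sum_distrib_right) (simp add: mult_ac)
  also have "\<dots> = (\<Sum>m\<le>s. \<Sum>n\<le>s. \<Sum>q\<le>s. \<Sum>r\<le>s. a m * b n * c q * (LL lam m n r * LL lam r q s))"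
    by (rule perm4a)
  also have "\<dots> = (\<Sum>m\<le>s. \<Sum>n\<le>s. \<Sum>q\<le>s. a m * b n * c q * (\<Sum>r\<le>s. LL lam m n r * LL lam r q s))"
    by (simp add: sum_distrib_left)
  also have "\<dots> = (\<Sum>m\<le>s. \<Sum>n\<le>s. \<Sum>q\<le>s. a m * b n * c q * (\<Sum>r\<le>s. LL lam n q r * LL lam m r s))"
    by (simp add: LL_assoc)
  also have "\<dots> = (\<Sum>m\<le>s. \<Sum>n\<le>s. \<Sum>q\<le>s. \<Sum>r\<le>s. a m * b n * c q * (LL lam n q r * LL lam m r s))"
    by (simp add: sum_distrib_left)
  also have "\<dots> = (\<Sum>m\<le>s. \<Sum>r\<le>s. \<Sum>n\<le>s. \<Sum>q\<le>s. a m * b n * c q * (LL lam n q r * LL lam m r s))"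
    by (rule perm4b[symmetric])
  also have "\<dots> = (\<Sum>m\<le>s. \<Sum>r\<le>s. a m * (\<Sum>n\<le>s. \<Sum>q\<le>s. b n * c q * LL lam n q r) * LL lam m r s)"
    by (simp only: sum_distrib_right sum_distrib_left) (simp add: mult_ac)
  also have "\<dots> = sh_mult lam a (sh_mult lam b c) s"
    unfolding sh_mult_LL[of lam a "sh_mult lam b c"] by (intro sum.cong refl) (simp add: sh_mult_ext)
  finally show ?thesis .
qed

lemma sh_mult_comm: "sh_mult lam a b r = sh_mult lam b a r"
  unfolding sh_mult_LL
  by (subst sum.swap) (simp add: LL_comm[of lam _ _ r] mult_ac)

lemma NN_0: "NN 0 n r = (if n = r then 1 else 0)"
  unfolding NN_def by auto

lemma sh_mult_one: "sh_mult lam (\<lambda>n. if n = 0 then 1 else 0) a r = a r"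
proof -
  have "sh_mult lam (\<lambda>n. if n = 0 then 1 else 0) a r = (\<Sum>n\<le>r. a n * LL lam 0 n r)"
  proof -
    have "(\<Sum>n\<le>r. (if m = 0 then 1 else 0) * a n * LL lam m n r) = (if m = 0 then (\<Sum>n\<le>r. a n * LL lam 0 n r) else 0)" for m
      by auto
    thus ?thesis unfolding sh_mult_LL by simp
  qed
  also have "\<dots> = (\<Sum>n\<le>r. if n = r then a r else 0)"
    by (intro sum.cong refl) (simp add: LL_def NN_0)
  also have "\<dots> = a r" by simp
  finally show ?thesis .
qed

lemma sh_mult_distr: "sh_mult lam (\<lambda>n. a n + b n) c r = sh_mult lam a c r + sh_mult lam b c r"
  unfolding sh_mult_LL by (simp add: distrib_right sum.distrib)

lemma fin_bound:
  fixes a :: "nat \<Rightarrow> 'a::zero"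
  shows "finite {n. a n \<noteq> 0} \<longleftrightarrow> (\<exists>B. \<forall>n>B. a n = 0)"
proof
  assume "finite {n. a n \<noteq> 0}"
  then obtain B where "\<forall>n\<in>{n. a n \<noteq> 0}. n \<le> B" using finite_nat_set_iff_bounded_le[THEN iffD1] by blast
  thus "\<exists>B. \<forall>n>B. a n = 0" by (intro exI[of _ B]) auto
next
  assume "\<exists>B. \<forall>n>B. a n = 0"
  then obtain B where "\<forall>n>B. a n = 0" by blast
  hence "{n. a n \<noteq> 0} \<subseteq> {..B}"
  proof (intro subsetI)
    fix n assume "n \<in> {n. a n \<noteq> 0}"
    thus "n \<in> {..B}" using \<open>\<forall>n>B. a n = 0\<close> leI by auto
  qed
  thus "finite {n. a n \<noteq> 0}" by (rule finite_subset) simp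
qed

lemma sh_mult_closed:
  assumes "a \<in> sh_carrier" "b \<in> sh_carrier"
  shows "sh_mult lam a b \<in> sh_carrier"
proof -
  obtain A where A: "\<forall>n>A. a n = 0" using assms fin_bound unfolding sh_carrier_def by blast
  obtain B where B: "\<forall>n>B. b n = 0" using assms fin_bound unfolding sh_carrier_def by blast
  have "sh_mult lam a b r = 0" if "r > A + B" for r
    unfolding sh_mult_LL
  proof (intro sum.neutral ballI)
    fix m n assume "m \<in> {..r}" "n \<in> {..r}"
    show "a m * b n * LL lam m n r = 0"
      using A B LL_nz[of lam m n r] that by (cases "m > A"; cases "n > B") auto
  qed
  thus ?thesis unfolding sh_carrier_def using fin_bound by blast
qed

lemma sh_cring: "cring (shuffle_baxter_ring lam)"
proof (rule cringI)
  show "abelian_group (shuffle_baxter_ring lam)"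
  proof (rule abelian_groupI)
    fix x y assume "x \<in> carrier (shuffle_baxter_ring lam)" "y \<in> carrier (shuffle_baxter_ring lam)"
    hence "finite ({n. x n \<noteq> 0} \<union> {n. y n \<noteq> 0})"
      by (simp add: shuffle_baxter_ring_def sh_carrier_def)
    moreover have "{n. x n + y n \<noteq> 0} \<subseteq> {n. x n \<noteq> 0} \<union> {n. y n \<noteq> 0}" by auto
    ultimately have "finite {n. x n + y n \<noteq> 0}" by (rule finite_subset[rotated])
    thus "x \<oplus>\<^bsub>shuffle_baxter_ring lam\<^esub> y \<in> carrier (shuffle_baxter_ring lam)"
      by (simp add: shuffle_baxter_ring_def sh_carrier_def)
  next
    fix x assume "x \<in> carrier (shuffle_baxter_ring lam)"
    thus "\<exists>y\<in>carrier (shuffle_baxter_ring lam). y \<oplus>\<^bsub>shuffle_baxter_ring lam\<^esub> x = \<zero>\<^bsub>shuffle_baxter_ring lam\<^esub>"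
      by (intro bexI[of _ "\<lambda>n. - x n"]) (auto simp: shuffle_baxter_ring_def sh_carrier_def)
  qed (auto simp: shuffle_baxter_ring_def sh_carrier_def add_ac)
  show "comm_monoid (shuffle_baxter_ring lam)"
  proof (rule comm_monoidI)
    fix x y assume "x \<in> carrier (shuffle_baxter_ring lam)" "y \<in> carrier (shuffle_baxter_ring lam)"
    thus "x \<otimes>\<^bsub>shuffle_baxter_ring lam\<^esub> y \<in> carrier (shuffle_baxter_ring lam)"
      by (simp add: shuffle_baxter_ring_def sh_mult_closed)
  next
    show "\<one>\<^bsub>shuffle_baxter_ring lam\<^esub> \<in> carrier (shuffle_baxter_ring lam)"
      by (simp add: shuffle_baxter_ring_def sh_carrier_def)
  next
    fix x y z
    show "x \<otimes>\<^bsub>shuffle_baxter_ring lam\<^esub> y \<otimes>\<^bsub>shuffle_baxter_ring lam\<^esub> z =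
          x \<otimes>\<^bsub>shuffle_baxter_ring lam\<^esub> (y \<otimes>\<^bsub>shuffle_baxter_ring lam\<^esub> z)"
      by (simp add: shuffle_baxter_ring_def) (rule ext, rule sh_mult_assoc)
  next
    fix x
    show "\<one>\<^bsub>shuffle_baxter_ring lam\<^esub> \<otimes>\<^bsub>shuffle_baxter_ring lam\<^esub> x = x"
      by (simp add: shuffle_baxter_ring_def) (rule ext, rule sh_mult_one)
  next
    fix x y
    show "x \<otimes>\<^bsub>shuffle_baxter_ring lam\<^esub> y = y \<otimes>\<^bsub>shuffle_baxter_ring lam\<^esub> x"
      by (simp add: shuffle_baxter_ring_def) (rule ext, rule sh_mult_comm)
  qed
next
  fix x y z
  show "(x \<oplus>\<^bsub>shuffle_baxter_ring lam\<^esub> y) \<otimes>\<^bsub>shuffle_baxter_ring lam\<^esub> z =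
        x \<otimes>\<^bsub>shuffle_baxter_ring lam\<^esub> z \<oplus>\<^bsub>shuffle_baxter_ring lam\<^esub> y \<otimes>\<^bsub>shuffle_baxter_ring lam\<^esub> z"
    by (simp add: shuffle_baxter_ring_def) (rule ext, rule sh_mult_distr)
qed

lemma prime_pow_dvd_choose:
  fixes p :: nat
  assumes p: "prime p" and m: "0 < m" "m < p ^ k"
  shows "p dvd (p ^ k choose m)"
proof (rule ccontr)
  assume nd: "\<not> p dvd (p ^ k choose m)"
  obtain j where j: "m = Suc j" using m by (cases m) auto
  have pk: "Suc (p ^ k - 1) = p ^ k" using p by (simp add: prime_gt_0_nat)
  have "Suc (p ^ k - 1) * (p ^ k - 1 choose j) = (Suc (p ^ k - 1) choose Suc j) * Suc j"
    by (rule Suc_times_binomial_eq)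
  hence eq: "p ^ k * (p ^ k - 1 choose j) = (p ^ k choose m) * m" unfolding pk j .
  have "coprime p (p ^ k choose m)" using p nd by (simp add: prime_imp_coprime)
  hence "coprime (p ^ k) (p ^ k choose m)" by simp
  moreover have "p ^ k dvd (p ^ k choose m) * m" unfolding eq[symmetric] by simp
  ultimately have "p ^ k dvd m" by (simp add: coprime_dvd_mult_right_iff)
  thus False using m by (auto dest: dvd_imp_le)
qed

context
  fixes lam :: "'a::field"
begin

abbreviation "SB \<equiv> shuffle_baxter_ring lam"

lemma SB_simps:
  "carrier SB = sh_carrier"
  "x \<otimes>\<^bsub>SB\<^esub> y = sh_mult lam x y"
  "x \<oplus>\<^bsub>SB\<^esub> y = (\<lambda>n. x n + y n)"
  "\<zero>\<^bsub>SB\<^esub> = (\<lambda>n. 0)"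
  "\<one>\<^bsub>SB\<^esub> = (\<lambda>n. if n = 0 then 1 else 0)"
  by (simp_all add: shuffle_baxter_ring_def)

lemma SB_neg:
  assumes "x \<in> carrier SB"
  shows "\<ominus>\<^bsub>SB\<^esub> x = (\<lambda>n. - x n)"
proof -
  interpret cring SB by (rule sh_cring)
  have "(\<lambda>n. - x n) \<in> carrier SB" using assms by (simp add: SB_simps sh_carrier_def)
  moreover have "(\<lambda>n. - x n) \<oplus>\<^bsub>SB\<^esub> x = \<zero>\<^bsub>SB\<^esub>" by (simp add: SB_simps)
  ultimately show ?thesis using assms by (intro minus_equality) auto
qed

end


lemma LL_vanish:
  fixes lam :: "'a::field"
  assumes "prime CHAR('a)" "0 < m" "m < CHAR('a) ^ k"
  shows "LL lam m n (CHAR('a) ^ k) = 0"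
proof -
  have "CHAR('a) dvd NN m n (CHAR('a) ^ k)"
    using prime_pow_dvd_choose[OF assms] unfolding NN_alt by auto
  hence "(of_nat (NN m n (CHAR('a) ^ k)) :: 'a) = 0" by (simp add: of_nat_eq_0_iff_char_dvd)
  thus ?thesis by (simp add: LL_def)
qed

theorem lemma3p2:
  fixes lam :: "'a::field"
  assumes "CHAR('a) \<noteq> 0"
  shows "ring (shuffle_baxter_ring lam) \<and> \<not> noetherian_ring (shuffle_baxter_ring lam)"
proof
  interpret cring "shuffle_baxter_ring lam" by (rule sh_cring)
  show "ring (shuffle_baxter_ring lam)" using sh_cring cring_def by blast
  define p where "p = CHAR('a)"
  have p: "prime p" unfolding p_def using assms by (intro prime_CHAR_semidom) simp
  show "\<not> noetherian_ring (shuffle_baxter_ring lam)"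
  proof
    assume "noetherian_ring (shuffle_baxter_ring lam)"
    then interpret noetherian_ring "shuffle_baxter_ring lam" .
    define J where "J = {c \<in> carrier (SB lam). c 0 = 0}"
    have "ideal J (SB lam)"
    proof (rule idealI)
      show "ring (SB lam)" using sh_cring cring_def by blast
      show "subgroup J (add_monoid (SB lam))"
      proof (rule add.subgroupI)
        show "J \<subseteq> carrier (SB lam)" unfolding J_def by auto
        show "J \<noteq> {}" unfolding J_def using zero_closed by (auto simp: SB_simps)
      next
        fix a assume "a \<in> J"
        thus "\<ominus>\<^bsub>SB lam\<^esub> a \<in> J"
          unfolding J_def using SB_neg[of a lam] by (auto simp: SB_simps sh_carrier_def)
      next
        fix a b assume ab: "a \<in> J" "b \<in> J"
        hence "a \<oplus>\<^bsub>SB lam\<^esub> b \<in> carrier (SB lam)" unfolding J_def by auto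
        thus "a \<oplus>\<^bsub>SB lam\<^esub> b \<in> J"
          using ab unfolding J_def by (auto simp: SB_simps(3))
      qed
    next
      fix a x assume "a \<in> J" "x \<in> carrier (SB lam)"
      thus "x \<otimes>\<^bsub>SB lam\<^esub> a \<in> J" unfolding J_def by (auto simp: SB_simps sh_mult_LL sh_mult_closed)
    next
      fix a x assume "a \<in> J" "x \<in> carrier (SB lam)"
      thus "a \<otimes>\<^bsub>SB lam\<^esub> x \<in> J" unfolding J_def by (auto simp: SB_simps sh_mult_LL sh_mult_closed)
    qed
    then obtain A where A: "A \<subseteq> carrier (SB lam)" "finite A" "J = Idl\<^bsub>SB lam\<^esub> A"
      using finetely_gen by blast
    have "finite (\<Union>a\<in>A. {n. a n \<noteq> 0})"
      using A(1,2) by (auto simp: SB_simps sh_carrier_def)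
    then obtain B where B: "\<forall>n\<in>(\<Union>a\<in>A. {n. a n \<noteq> 0}). n \<le> B"
      using finite_nat_set_iff_bounded_le[THEN iffD1] by blast
    define P where "P = p ^ B"
    have "2 ^ B \<le> P" unfolding P_def using p by (intro power_mono) (auto simp: prime_ge_2_nat)
    hence BP: "B < P" using less_exp[of B] by linarith
    define K where "K = {c \<in> carrier (SB lam). \<forall>d\<in>carrier (SB lam). (c \<otimes>\<^bsub>SB lam\<^esub> d) P = 0}"
    have "ideal K (SB lam)"
    proof (rule idealI)
      show "ring (SB lam)" using sh_cring cring_def by blast
      show "subgroup K (add_monoid (SB lam))"
      proof (rule add.subgroupI)
        show "K \<subseteq> carrier (SB lam)" unfolding K_def by auto
        show "K \<noteq> {}" unfolding K_def using zero_closed by (auto simp: SB_simps sh_mult_LL)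
      next
        fix a assume a: "a \<in> K"
        hence ac: "a \<in> carrier (SB lam)" unfolding K_def by auto
        show "\<ominus>\<^bsub>SB lam\<^esub> a \<in> K" unfolding K_def
        proof (intro CollectI conjI ballI)
          show "\<ominus>\<^bsub>SB lam\<^esub> a \<in> carrier (SB lam)" by (rule a_inv_closed[OF ac])
          fix d assume d: "d \<in> carrier (SB lam)"
          have "(\<ominus>\<^bsub>SB lam\<^esub> a) \<otimes>\<^bsub>SB lam\<^esub> d = \<ominus>\<^bsub>SB lam\<^esub> (a \<otimes>\<^bsub>SB lam\<^esub> d)"
            using l_minus ac d by blast
          also have "\<dots> = (\<lambda>n. - (a \<otimes>\<^bsub>SB lam\<^esub> d) n)"
            by (rule SB_neg) (use ac d in simp)
          finally show "((\<ominus>\<^bsub>SB lam\<^esub> a) \<otimes>\<^bsub>SB lam\<^esub> d) P = 0"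
            using a d unfolding K_def by simp
        qed
      next
        fix a b assume ab: "a \<in> K" "b \<in> K"
        hence ac: "a \<in> carrier (SB lam)" "b \<in> carrier (SB lam)" unfolding K_def by auto
        show "a \<oplus>\<^bsub>SB lam\<^esub> b \<in> K" unfolding K_def
        proof (intro CollectI conjI ballI)
          show "a \<oplus>\<^bsub>SB lam\<^esub> b \<in> carrier (SB lam)" using ac by simp
          fix d assume d: "d \<in> carrier (SB lam)"
          have "(a \<oplus>\<^bsub>SB lam\<^esub> b) \<otimes>\<^bsub>SB lam\<^esub> d = a \<otimes>\<^bsub>SB lam\<^esub> d \<oplus>\<^bsub>SB lam\<^esub> b \<otimes>\<^bsub>SB lam\<^esub> d"
            using l_distr ac d by blast
          thus "((a \<oplus>\<^bsub>SB lam\<^esub> b) \<otimes>\<^bsub>SB lam\<^esub> d) P = 0"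
            using ab d unfolding K_def by (simp only: SB_simps(3)) simp
        qed
      qed
    next
      fix a x assume "a \<in> K" "x \<in> carrier (SB lam)"
      thus "x \<otimes>\<^bsub>SB lam\<^esub> a \<in> K" unfolding K_def
        by (auto simp: m_assoc[symmetric] m_comm[of x a]) (metis m_assoc m_closed)
    next
      fix a x assume "a \<in> K" "x \<in> carrier (SB lam)"
      thus "a \<otimes>\<^bsub>SB lam\<^esub> x \<in> K" unfolding K_def
        by (auto simp: m_assoc)
    qed
    have "A \<subseteq> K"
    proof
      fix a assume aA: "a \<in> A"
      hence ac: "a \<in> carrier (SB lam)" using A by auto
      have "a \<in> J" using aA A(3) genideal_self[OF A(1)] by auto
      hence a0: "a 0 = 0" unfolding J_def by auto
      have aB: "a n = 0" if "n > B" for n using B aA that by force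
      have "(a \<otimes>\<^bsub>SB lam\<^esub> d) P = 0" for d
        unfolding SB_simps sh_mult_LL
      proof (intro sum.neutral ballI)
        fix m n assume "m \<in> {..P}" "n \<in> {..P}"
        show "a m * d n * LL lam m n P = 0"
        proof (cases "0 < m \<and> m \<le> B")
          case True
          hence "LL lam m n P = 0" unfolding P_def p_def
            using LL_vanish[of m B lam n] p BP by (auto simp: p_def P_def)
          thus ?thesis by simp
        next
          case False
          hence "a m = 0" using a0 aB by (cases "m = 0") auto
          thus ?thesis by simp
        qed
      qed
      thus "a \<in> K" unfolding K_def using ac by auto
    qed
    hence "J \<subseteq> K" unfolding A(3) by (rule genideal_minimal[OF \<open>ideal K (SB lam)\<close>])
    define e where "e = (\<lambda>n. if n = P then (1::'a) else 0)"
    have ec: "e \<in> carrier (SB lam)" unfolding e_def SB_simps sh_carrier_def by simp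
    have "P > 0" using BP by simp
    hence "e \<in> J" unfolding J_def using ec by (auto simp: e_def)
    hence "e \<in> K" using \<open>J \<subseteq> K\<close> by auto
    hence "(e \<otimes>\<^bsub>SB lam\<^esub> \<one>\<^bsub>SB lam\<^esub>) P = 0" unfolding K_def using one_closed by blast
    hence "e P = 0" using r_one[OF ec] by simp
    thus False by (simp add: e_def)
  qed
qed

end
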